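(* Let $n\ge t+1$, $t\ge1$ and $s\ge2$. Then, as ideals of $S=K[x_1,\ldots,x_n]$, $$\bigl(I_t(L_{n-1})^s:u_{n-t+1}\bigr)+(x_{n-t})=\bigl(I_t(L_{n-t-1})^s,\,x_{n-t}\bigr).$$ In particular, if $n\le 2t$ then $I_t(L_{n-t-1})=0$ and the left-hand side equals $(x_{n-t})$.
   Context: $K$ is a field. For $1\le m\le n$ and $m\ge t$, $I_t(L_m)$ denotes the ideal of $S$ generated by $u_i=x_ix_{i+1}\cdots x_{i+t-1}$ for $i=1,\ldots,m-t+1$ (the $t$-path ideal of the line graph on $x_1,\ldots,x_m$); by convention $I_t(L_m)=0$ if $m<t$. Here $u_{n-t+1}=x_{n-t+1}\cdots x_n$. *)

theory Defs
  imports Main "HOL-Library.Poly_Mapping"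
begin

text \<open>Multivariate polynomials over a field K: finitely supported maps from
monomials (finitely supported exponent vectors) to coefficients; multiplication is
convolution (library instance).\<close>

type_synonym 'k mpoly = "(nat \<Rightarrow>\<^sub>0 nat) \<Rightarrow>\<^sub>0 'k"

definition var :: "nat \<Rightarrow> 'k::comm_ring_1 mpoly" where
  "var i = Poly_Mapping.single (Poly_Mapping.single i 1) 1"

definition polyring :: "nat \<Rightarrow> 'k::comm_ring_1 mpoly set" where
  "polyring n = {p :: 'k mpoly. \<forall>m \<in> Poly_Mapping.keys p. Poly_Mapping.keys m \<subseteq> {1..n}}"

definition ideal_gen :: "nat \<Rightarrow> 'k::comm_ring_1 mpoly set \<Rightarrow> 'k mpoly set" where
  "ideal_gen n G = {(\<Sum>g\<in>F. c g * g) | F c. finite F \<and> F \<subseteq> G \<and> (\<forall>g\<in>F. c g \<in> polyring n)}"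

definition ideal_mult :: "nat \<Rightarrow> 'k::comm_ring_1 mpoly set \<Rightarrow> 'k mpoly set \<Rightarrow> 'k mpoly set" where
  "ideal_mult n I J = ideal_gen n {a * b | a b. a \<in> I \<and> b \<in> J}"

fun ideal_pow :: "nat \<Rightarrow> 'k::comm_ring_1 mpoly set \<Rightarrow> nat \<Rightarrow> 'k mpoly set" where
  "ideal_pow n I 0 = polyring n"
| "ideal_pow n I (Suc s) = ideal_mult n (ideal_pow n I s) I"

definition colon :: "nat \<Rightarrow> 'k::comm_ring_1 mpoly set \<Rightarrow> 'k mpoly \<Rightarrow> 'k mpoly set" where
  "colon n I f = {g \<in> polyring n. g * f \<in> I}"

definition path_mon :: "nat \<Rightarrow> nat \<Rightarrow> 'k::comm_ring_1 mpoly" where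
  "path_mon t i = (\<Prod>j\<in>{i..<i+t}. var j)"

text \<open>I_t(L_m) as an ideal of S = K[x_1..x_n]; generated by u_1,...,u_{m-t+1};
  the zero ideal if m < t (empty generating set).\<close>
definition path_ideal :: "nat \<Rightarrow> nat \<Rightarrow> nat \<Rightarrow> 'k::comm_ring_1 mpoly set" where
  "path_ideal n t m = ideal_gen n {path_mon t i | i. 1 \<le> i \<and> i + t \<le> m + 1}"

end

theory Submission
  imports Defs
begin

lemma poly_induct[case_names zero single add]:
  assumes "P 0" "\<And>m c. P (Poly_Mapping.single m c)" "\<And>p q. P p \<Longrightarrow> P q \<Longrightarrow> P (p + q)"
  shows "P (p :: ('a \<Rightarrow>\<^sub>0 'b::monoid_add))"
proof (induction p rule: update_induct)
  case const then show ?case using assms(1) .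
next
  case (update f a b)
  have "Poly_Mapping.update a b f = f + Poly_Mapping.single a b"
    using update(1) by (intro poly_mapping_eqI) (auto simp: lookup_update lookup_add lookup_single in_keys_iff when_def)
  then show ?case using assms(2,3) update(3) by metis
qed

definition killv :: "nat \<Rightarrow> 'k::comm_ring_1 mpoly \<Rightarrow> 'k mpoly" where
  "killv j p = Abs_poly_mapping (\<lambda>m::nat \<Rightarrow>\<^sub>0 nat. if Poly_Mapping.lookup m j = 0 then Poly_Mapping.lookup p m else 0)"

lemma lookup_killv: "Poly_Mapping.lookup (killv j p) m = (if Poly_Mapping.lookup m j = 0 then Poly_Mapping.lookup p m else 0)"
proof -
  have "finite {m. (if Poly_Mapping.lookup m j = 0 then Poly_Mapping.lookup p m else 0) \<noteq> 0}"
    by (rule finite_subset[of _ "Poly_Mapping.keys p"]) (auto simp: in_keys_iff)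
  then show ?thesis unfolding killv_def by simp
qed

definition dvv :: "nat \<Rightarrow> 'k::comm_ring_1 mpoly \<Rightarrow> 'k mpoly" where
  "dvv j p = Abs_poly_mapping (\<lambda>m::nat \<Rightarrow>\<^sub>0 nat. Poly_Mapping.lookup p (m + Poly_Mapping.single j 1))"

lemma lookup_dvv: "Poly_Mapping.lookup (dvv j p) m = Poly_Mapping.lookup p (m + Poly_Mapping.single j 1)"
proof -
  have "{m. Poly_Mapping.lookup p (m + Poly_Mapping.single j 1) \<noteq> 0} = (\<lambda>m. m + Poly_Mapping.single j 1) -` Poly_Mapping.keys p"
    by (auto simp: in_keys_iff)
  moreover have "finite ((\<lambda>m. m + Poly_Mapping.single j (1::nat)) -` Poly_Mapping.keys p)"
    by (rule finite_vimageI) (auto simp: inj_def)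
  ultimately show ?thesis unfolding dvv_def by simp
qed

lemma killv_add: "killv j (p + q) = killv j p + killv j q"
  by (intro poly_mapping_eqI) (simp add: lookup_killv lookup_add)
lemma dvv_add: "dvv j (p + q) = dvv j p + dvv j q"
  by (intro poly_mapping_eqI) (simp add: lookup_dvv lookup_add)
lemma killv_0[simp]: "killv j 0 = 0"
  by (intro poly_mapping_eqI) (simp add: lookup_killv)
lemma dvv_0[simp]: "dvv j 0 = 0"
  by (intro poly_mapping_eqI) (simp add: lookup_dvv)

lemma killv_single: "killv j (Poly_Mapping.single m c) = (if Poly_Mapping.lookup m j = 0 then Poly_Mapping.single m c else 0)"
  by (intro poly_mapping_eqI) (auto simp add: lookup_killv lookup_single when_def)

lemma dvv_single: "dvv j (Poly_Mapping.single m c) =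
   (if Poly_Mapping.lookup m j = 0 then 0 else Poly_Mapping.single (m - Poly_Mapping.single j 1) c)"
proof (intro poly_mapping_eqI)
  fix k
  have *: "(m = k + Poly_Mapping.single j 1) \<longleftrightarrow> (Poly_Mapping.lookup m j \<noteq> 0 \<and> m - Poly_Mapping.single j 1 = k)"
    by (auto simp: poly_mapping_eq_iff fun_eq_iff lookup_add lookup_minus lookup_single when_def)
  show "Poly_Mapping.lookup (dvv j (Poly_Mapping.single m c)) k = Poly_Mapping.lookup (if Poly_Mapping.lookup m j = 0 then 0 else Poly_Mapping.single (m - Poly_Mapping.single j 1) c) k"
    using * by (auto simp: lookup_dvv lookup_single when_def)
qed

lemma mono_sub1: "0 < Poly_Mapping.lookup b j \<Longrightarrow> a + b - Poly_Mapping.single j (Suc 0) = a + (b - Poly_Mapping.single j (Suc 0))"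
  by (intro poly_mapping_eqI) (auto simp: lookup_add lookup_minus lookup_single when_def)

lemma mono_sub1': "0 < Poly_Mapping.lookup a j \<Longrightarrow> a + b - Poly_Mapping.single j (Suc 0) = a - Poly_Mapping.single j (Suc 0) + b"
  by (intro poly_mapping_eqI) (auto simp: lookup_add lookup_minus lookup_single when_def)

lemma mono_sub3: "0 < Poly_Mapping.lookup a j \<Longrightarrow> 0 < Poly_Mapping.lookup b j \<Longrightarrow> a + (b - Poly_Mapping.single j (Suc 0)) = a - Poly_Mapping.single j (Suc 0) + b"
  by (intro poly_mapping_eqI) (auto simp: lookup_add lookup_minus lookup_single when_def)

lemma mono_sub2: "0 < Poly_Mapping.lookup b j \<Longrightarrow> Poly_Mapping.single j (Suc 0) + (b - Poly_Mapping.single j (Suc 0)) = b"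
  by (intro poly_mapping_eqI) (auto simp: lookup_add lookup_minus lookup_single when_def)

lemma killv_mult: "killv j (p * q) = killv j p * killv j q"
proof (induction p rule: poly_induct)
  case zero then show ?case by simp
next
  case (add p1 p2) then show ?case by (simp add: distrib_right killv_add)
next
  case (single m c)
  show ?case
  proof (induction q rule: poly_induct)
    case zero then show ?case by simp
  next
    case (add q1 q2) then show ?case by (simp add: distrib_left killv_add)
  next
    case (single m' c')
    show ?case by (simp add: mult_single killv_single lookup_add)
  qed
qed

lemma dvv_mult: "dvv j (p * q) = dvv j p * q + killv j p * dvv j q"
proof (induction p rule: poly_induct)
  case zero then show ?case by simp
next
  case (add p1 p2) then show ?case by (simp add: distrib_right killv_add dvv_add algebra_simps)
next
  case (single m c)
  show ?case
  proof (induction q rule: poly_induct)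
    case zero then show ?case by simp
  next
    case (add q1 q2) then show ?case by (simp add: distrib_left killv_add dvv_add algebra_simps)
  next
    case (single m' c')
    show ?case
      by (auto simp add: mult_single killv_single dvv_single lookup_add mono_sub1 mono_sub1' mono_sub3 add.commute[of m' m])
  qed
qed

lemma killv_var: "killv j (var i) = (if i = j then 0 else var i)"
  by (simp add: var_def killv_single lookup_single when_def)

lemma dvv_var: "dvv j (var i) = (if i = j then 1 else 0)"
  by (simp add: var_def dvv_single lookup_single when_def)

lemma killv_one[simp]: "killv j 1 = 1"
  by (metis killv_single single_one lookup_zero)

lemma dvv_one[simp]: "dvv j 1 = 0"
  by (metis dvv_single single_one lookup_zero)

lemma decomp: "killv j p + var j * dvv j p = p"
proof (induction p rule: poly_induct)
  case zero then show ?case by simp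
next
  case (add p1 p2) then show ?case by (simp add: killv_add dvv_add algebra_simps)
next
  case (single m c)
  show ?case by (auto simp add: var_def killv_single dvv_single mult_single mono_sub2)
qed

lemma dvv_times_var: "dvv j (g * var j) = g"
  using decomp[of j g] by (simp add: dvv_mult dvv_var killv_var algebra_simps)

lemma keys_monom_add: "Poly_Mapping.keys ((a::nat \<Rightarrow>\<^sub>0 nat) + b) \<subseteq> Poly_Mapping.keys a \<union> Poly_Mapping.keys b"
  by (rule keys_add)

lemma polyring_0[simp]: "0 \<in> polyring n"
  by (simp add: polyring_def)
lemma polyring_1[simp]: "1 \<in> polyring n"
  by (simp add: polyring_def)
lemma polyring_add: "p \<in> polyring n \<Longrightarrow> q \<in> polyring n \<Longrightarrow> p + q \<in> polyring n"
  unfolding polyring_def using keys_add[of p q] by blast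
lemma polyring_mult: assumes "p \<in> polyring n" "q \<in> polyring n" shows "p * q \<in> polyring n"
  unfolding polyring_def mem_Collect_eq
proof (intro ballI)
  have p: "\<forall>m\<in>Poly_Mapping.keys p. Poly_Mapping.keys m \<subseteq> {1..n}"
    and q: "\<forall>m\<in>Poly_Mapping.keys q. Poly_Mapping.keys m \<subseteq> {1..n}" using assms by (auto simp: polyring_def)
  fix m assume m: "m \<in> Poly_Mapping.keys (p * q)"
  from m keys_mult obtain a b where "m = a + b" "a \<in> Poly_Mapping.keys p" "b \<in> Poly_Mapping.keys q" by blast
  then show "Poly_Mapping.keys m \<subseteq> {1..n}" using p q keys_monom_add[of a b] by blast
qed
lemma polyring_var: "1 \<le> i \<Longrightarrow> i \<le> n \<Longrightarrow> var i \<in> polyring n"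
  by (simp add: polyring_def var_def)
lemma polyring_prod: "finite A \<Longrightarrow> (\<And>i. i \<in> A \<Longrightarrow> f i \<in> polyring n) \<Longrightarrow> prod f A \<in> polyring n"
  by (induction A rule: finite_induct) (auto intro: polyring_mult)
lemma keys_killv: "Poly_Mapping.keys (killv j p) \<subseteq> Poly_Mapping.keys p"
  by (auto simp: in_keys_iff lookup_killv split: if_splits)
lemma polyring_killv: "p \<in> polyring n \<Longrightarrow> killv j p \<in> polyring n"
  unfolding polyring_def using keys_killv[of j p] by blast
lemma polyring_dvv: assumes "p \<in> polyring n" shows "dvv j p \<in> polyring n"
  unfolding polyring_def mem_Collect_eq
proof (intro ballI subsetI)
  have p: "\<forall>m\<in>Poly_Mapping.keys p. Poly_Mapping.keys m \<subseteq> {1..n}" using assms by (auto simp: polyring_def)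
  fix m i assume m: "m \<in> Poly_Mapping.keys (dvv j p)" and i: "i \<in> Poly_Mapping.keys m"
  have "m + Poly_Mapping.single j 1 \<in> Poly_Mapping.keys p" using m by (simp add: in_keys_iff lookup_dvv)
  moreover have "i \<in> Poly_Mapping.keys (m + Poly_Mapping.single j 1)" using i by (simp add: in_keys_iff lookup_add)
  ultimately show "i \<in> {1..n}" using p by blast
qed

definition isideal :: "nat \<Rightarrow> 'k::comm_ring_1 mpoly set \<Rightarrow> bool" where
  "isideal n X \<longleftrightarrow> 0 \<in> X \<and> (\<forall>a\<in>X. \<forall>b\<in>X. a + b \<in> X) \<and> (\<forall>c\<in>polyring n. \<forall>a\<in>X. c * a \<in> X)"

lemma isidealD: assumes "isideal n X"
  shows "0 \<in> X" "a \<in> X \<Longrightarrow> b \<in> X \<Longrightarrow> a + b \<in> X" "c \<in> polyring n \<Longrightarrow> a \<in> X \<Longrightarrow> c * a \<in> X"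
    "c \<in> polyring n \<Longrightarrow> a \<in> X \<Longrightarrow> a * c \<in> X"
  using assms unfolding isideal_def by (auto simp: mult.commute)

lemma isideal_sum: assumes X: "isideal n X" and "finite F" "\<And>x. x \<in> F \<Longrightarrow> f x \<in> X" shows "sum f F \<in> X"
  using assms(2,3)
proof (induction F rule: finite_induct)
  case empty then show ?case using isidealD(1)[OF X] by simp
next
  case (insert x F) then show ?case using isidealD(2)[OF X, of "f x" "sum f F"] by simp
qed

lemma polyring_isideal: "isideal n (polyring n)"
  unfolding isideal_def by (auto intro: polyring_add polyring_mult)

lemma mem_ideal_gen: "x \<in> ideal_gen n G \<longleftrightarrow>
   (\<exists>F c. x = (\<Sum>g\<in>F. c g * g) \<and> finite F \<and> F \<subseteq> G \<and> (\<forall>g\<in>F. c g \<in> polyring n))"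
  unfolding ideal_gen_def by blast

lemma ideal_gen_isideal: "isideal n (ideal_gen n (G :: 'k::comm_ring_1 mpoly set))"
  unfolding isideal_def
proof (intro conjI ballI)
  show "0 \<in> ideal_gen n G" unfolding mem_ideal_gen by (rule exI[of _ "{}"]) auto
next
  fix a b assume "a \<in> ideal_gen n G" "b \<in> ideal_gen n G"
  then obtain F1 c1 F2 c2 where a: "a = (\<Sum>g\<in>F1. c1 g * g)" "finite F1" "F1 \<subseteq> G" "\<forall>g\<in>F1. c1 g \<in> polyring n"
    and b: "b = (\<Sum>g\<in>F2. c2 g * g)" "finite F2" "F2 \<subseteq> G" "\<forall>g\<in>F2. c2 g \<in> polyring n"
    unfolding mem_ideal_gen by blast
  define c where "c g = (if g \<in> F1 then c1 g else 0) + (if g \<in> F2 then c2 g else 0)" for g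
  have "(\<Sum>g\<in>F1 \<union> F2. c g * g) = (\<Sum>g\<in>F1 \<union> F2. (if g \<in> F1 then c1 g * g else 0)) + (\<Sum>g\<in>F1 \<union> F2. (if g \<in> F2 then c2 g * g else 0))"
    unfolding c_def distrib_right sum.distrib by (intro arg_cong2[where f="(+)"] sum.cong) auto
  also have "\<dots> = a + b"
    using a b by (simp add: sum.inter_restrict[symmetric] Int_absorb1 Int_absorb2)
  finally have "a + b = (\<Sum>g\<in>F1 \<union> F2. c g * g)" by simp
  moreover have "\<forall>g\<in>F1 \<union> F2. c g \<in> polyring n"
    using a b by (auto simp: c_def intro: polyring_add)
  ultimately show "a + b \<in> ideal_gen n G" unfolding mem_ideal_gen using a b
    by (intro exI[of _ "F1 \<union> F2"] exI[of _ c]) auto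
next
  fix c a :: "'k mpoly" assume c: "c \<in> polyring n" and "a \<in> ideal_gen n G"
  then obtain F d where a: "a = (\<Sum>g\<in>F. d g * g)" "finite F" "F \<subseteq> G" "\<forall>g\<in>F. d g \<in> polyring n"
    unfolding mem_ideal_gen by blast
  have "c * a = (\<Sum>g\<in>F. (c * d g) * g)" using a by (simp add: sum_distrib_left mult.assoc)
  moreover have "\<forall>g\<in>F. c * d g \<in> polyring n" using a c by (auto intro: polyring_mult)
  ultimately show "c * a \<in> ideal_gen n G" unfolding mem_ideal_gen using a
    by (intro exI[of _ F] exI[of _ "\<lambda>g. c * d g"]) auto
qed

lemma gen_in: "g \<in> G \<Longrightarrow> g \<in> ideal_gen n G"
  unfolding mem_ideal_gen by (rule exI[of _ "{g}"], rule exI[of _ "\<lambda>_. 1"]) auto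

lemma ideal_gen_least: assumes "isideal n X" "G \<subseteq> X" shows "ideal_gen n G \<subseteq> X"
proof
  fix x assume "x \<in> ideal_gen n G"
  then obtain F d where a: "x = (\<Sum>g\<in>F. d g * g)" "finite F" "F \<subseteq> G" "\<forall>g\<in>F. d g \<in> polyring n"
    unfolding mem_ideal_gen by blast
  show "x \<in> X" unfolding a(1)
  proof (rule isideal_sum[OF assms(1) a(2)])
    fix g assume "g \<in> F"
    then show "d g * g \<in> X" using a assms by (intro isidealD(3)[OF assms(1)]) auto
  qed
qed

lemma ideal_gen_mono: "G \<subseteq> ideal_gen n H \<Longrightarrow> ideal_gen n G \<subseteq> ideal_gen n H"
  by (rule ideal_gen_least[OF ideal_gen_isideal])

lemma ideal_gen_polyring: "G \<subseteq> polyring n \<Longrightarrow> ideal_gen n G \<subseteq> polyring n"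
  by (rule ideal_gen_least[OF polyring_isideal])

lemma ideal_pow_isideal: "isideal n (ideal_pow n I s)"
  by (cases s) (auto simp: polyring_isideal ideal_mult_def ideal_gen_isideal)

lemma ideal_pow_polyring: "I \<subseteq> polyring n \<Longrightarrow> ideal_pow n I s \<subseteq> polyring n"
proof (induction s)
  case 0 then show ?case by simp
next
  case (Suc s)
  show ?case unfolding ideal_pow.simps ideal_mult_def
    using Suc by (intro ideal_gen_polyring) (auto intro: polyring_mult)
qed

lemma ideal_pow_mono: "I \<subseteq> I' \<Longrightarrow> ideal_pow n I s \<subseteq> ideal_pow n I' s"
proof (induction s)
  case 0 then show ?case by simp
next
  case (Suc s)
  show ?case unfolding ideal_pow.simps ideal_mult_def
    using Suc by (intro ideal_gen_mono) (auto intro!: gen_in)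
qed

definition dk_closed :: "nat \<Rightarrow> 'k::comm_ring_1 mpoly set \<Rightarrow> bool" where
  "dk_closed j Y \<longleftrightarrow> (\<forall>p\<in>Y. dvv j p \<in> Y \<and> killv j p \<in> Y)"

lemma dk_gen:
  assumes G: "\<forall>g\<in>G. dvv j g \<in> ideal_gen n G \<and> killv j g \<in> ideal_gen n (G :: 'k::comm_ring_1 mpoly set)"
  shows "dk_closed j (ideal_gen n G)"
proof -
  let ?Y = "ideal_gen n G"
  let ?X = "{p\<in>?Y. dvv j p \<in> ?Y \<and> killv j p \<in> ?Y}"
  have Y: "isideal n ?Y" by (rule ideal_gen_isideal)
  have "isideal n ?X"
    unfolding isideal_def
  proof (intro conjI ballI)
    show "0 \<in> ?X" using isidealD(1)[OF Y] by simp
  next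
    fix a b assume "a \<in> ?X" "b \<in> ?X"
    then show "a + b \<in> ?X" by (simp add: dvv_add killv_add isidealD(2)[OF Y])
  next
    fix c a :: "'k mpoly" assume c: "c \<in> polyring n" and a: "a \<in> ?X"
    have "c * a \<in> ?Y" using a c by (simp add: isidealD(3)[OF Y])
    moreover have "dvv j (c * a) \<in> ?Y" unfolding dvv_mult using a c
      by (intro isidealD(2)[OF Y] isidealD(3)[OF Y]) (auto intro: polyring_dvv polyring_killv)
    moreover have "killv j (c * a) \<in> ?Y" unfolding killv_mult using a c
      by (intro isidealD(3)[OF Y]) (auto intro: polyring_killv)
    ultimately show "c * a \<in> ?X" by simp
  qed
  moreover have "G \<subseteq> ?X" using G by (auto intro: gen_in)
  ultimately have "?Y \<subseteq> ?X" by (rule ideal_gen_least)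
  then show ?thesis unfolding dk_closed_def by blast
qed

lemma dk_mult: assumes I: "dk_closed j I" and J: "dk_closed j J" shows "dk_closed j (ideal_mult n I J)"
  unfolding ideal_mult_def
proof (rule dk_gen, intro ballI)
  let ?G = "{a * b |a b. a \<in> I \<and> b \<in> J}"
  fix g assume "g \<in> ?G"
  then obtain a b where g: "g = a * b" "a \<in> I" "b \<in> J" by blast
  have 1: "dvv j a * b \<in> ?G" "killv j a * dvv j b \<in> ?G" "killv j a * killv j b \<in> ?G"
    using g I J unfolding dk_closed_def by blast+
  have 2: "dvv j a * b \<in> ideal_gen n ?G" "killv j a * dvv j b \<in> ideal_gen n ?G"
    "killv j a * killv j b \<in> ideal_gen n ?G"
    using 1 by (auto intro: gen_in)
  show "dvv j g \<in> ideal_gen n ?G \<and> killv j g \<in> ideal_gen n ?G"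
    unfolding g dvv_mult killv_mult using 2(3) isidealD(2)[OF ideal_gen_isideal 2(1) 2(2)] by simp
qed

lemma dk_polyring: "dk_closed j (polyring n)"
  unfolding dk_closed_def by (auto intro: polyring_dvv polyring_killv)

lemma dk_pow: "dk_closed j I \<Longrightarrow> dk_closed j (ideal_pow n I s)"
  by (induction s) (auto simp: dk_polyring dk_mult)

lemma cancel_var: assumes "dk_closed j Y" "g * var j \<in> Y" shows "g \<in> Y"
proof -
  have "dvv j (g * var j) \<in> Y" using assms unfolding dk_closed_def by blast
  then show ?thesis by (simp only: dvv_times_var)
qed

lemma cancel_prod:
  assumes "finite A" "\<forall>j\<in>A. dk_closed j Y" 
  shows "g * prod var A \<in> Y \<Longrightarrow> g \<in> Y"
  using assms
proof (induction A arbitrary: g rule: finite_induct)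
  case empty then show ?case by simp
next
  case (insert a A)
  have "(g * var a) * prod var A \<in> Y" using insert(1,2,4) by (simp add: mult.assoc)
  then have "g * var a \<in> Y" using insert by blast
  then show ?case using cancel_var insert(5) by blast
qed

lemma kill_gen:
  assumes Y: "isideal n (Y :: 'k::comm_ring_1 mpoly set)" and G: "\<forall>g\<in>G. killv j g \<in> Y" and p: "p \<in> ideal_gen n G"
  shows "killv j p \<in> Y"
proof -
  let ?X = "{p. killv j p \<in> Y}"
  have "isideal n ?X"
    unfolding isideal_def
  proof (intro conjI ballI)
    show "0 \<in> ?X" using isidealD(1)[OF Y] by simp
  next
    fix a b assume "a \<in> ?X" "b \<in> ?X"
    then show "a + b \<in> ?X" by (simp add: killv_add isidealD(2)[OF Y])
  next
    fix c a :: "'k mpoly" assume c: "c \<in> polyring n" and a: "a \<in> ?X"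
    then show "c * a \<in> ?X" unfolding mem_Collect_eq killv_mult
      by (intro isidealD(3)[OF Y]) (auto intro: polyring_killv)
  qed
  moreover have "G \<subseteq> ?X" using G by auto
  ultimately have "ideal_gen n G \<subseteq> ?X" by (rule ideal_gen_least)
  then show ?thesis using p by blast
qed

lemma kill_pow:
  assumes "\<forall>p\<in>I. killv j p \<in> J"
  shows "p \<in> ideal_pow n I s \<Longrightarrow> killv j p \<in> ideal_pow n J s"
proof (induction s arbitrary: p)
  case 0 then show ?case by (simp add: polyring_killv)
next
  case (Suc s)
  show ?case using Suc(2) unfolding ideal_pow.simps ideal_mult_def
  proof (rule kill_gen[OF ideal_gen_isideal, rotated])
    show "\<forall>g\<in>{a * b |a b. a \<in> ideal_pow n I s \<and> b \<in> I}.
          killv j g \<in> ideal_gen n {a * b |a b. a \<in> ideal_pow n J s \<and> b \<in> J}"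
    proof
      fix g assume "g \<in> {a * b |a b. a \<in> ideal_pow n I s \<and> b \<in> I}"
      then obtain a b where g: "g = a * b" "a \<in> ideal_pow n I s" "b \<in> I" by blast
      have "killv j a \<in> ideal_pow n J s" "killv j b \<in> J" using Suc(1) assms g by auto
      then have "killv j g \<in> {a * b |a b. a \<in> ideal_pow n J s \<and> b \<in> J}"
        unfolding g killv_mult by blast
      then show "killv j g \<in> ideal_gen n {a * b |a b. a \<in> ideal_pow n J s \<and> b \<in> J}"
        by (rule gen_in)
    qed
  qed
qed

lemma killv_prod: "finite A \<Longrightarrow> killv j (prod f A) = prod (\<lambda>i. killv j (f i)) A"
  by (induction A rule: finite_induct) (auto simp: killv_mult)

lemma killv_prod_var_free: "finite A \<Longrightarrow> j \<notin> A \<Longrightarrow> killv j (prod var A) = prod var A"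
  by (induction A rule: finite_induct) (auto simp: killv_mult killv_var)

lemma dvv_prod_var_free: "finite A \<Longrightarrow> j \<notin> A \<Longrightarrow> dvv j (prod var A) = 0"
  by (induction A rule: finite_induct) (auto simp: dvv_mult dvv_var killv_var)

lemma path_mon_polyring: "1 \<le> i \<Longrightarrow> i + t \<le> n + 1 \<Longrightarrow> path_mon t i \<in> polyring n"
  unfolding path_mon_def by (intro polyring_prod) (auto intro: polyring_var)

lemma ideal_gen_empty: "ideal_gen n {} = ({0} :: 'k::comm_ring_1 mpoly set)"
proof
  have "isideal n ({0} :: 'k mpoly set)" unfolding isideal_def by auto
  then show "ideal_gen n {} \<subseteq> ({0} :: 'k mpoly set)" by (rule ideal_gen_least) auto
  show "{0} \<subseteq> ideal_gen n ({} :: 'k mpoly set)" using isidealD(1)[OF ideal_gen_isideal] by auto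
qed

lemma ideal_pow_zero: "ideal_pow n ({0} :: 'k::comm_ring_1 mpoly set) (Suc s) = {0}"
proof
  have "isideal n ({0} :: 'k mpoly set)" unfolding isideal_def by auto
  then show "ideal_pow n {0} (Suc s) \<subseteq> ({0} :: 'k mpoly set)"
    unfolding ideal_pow.simps ideal_mult_def by (rule ideal_gen_least) auto
  show "{0} \<subseteq> ideal_pow n ({0} :: 'k mpoly set) (Suc s)"
    using isidealD(1)[OF ideal_pow_isideal[of n "{0} :: 'k mpoly set" "Suc s"]] by blast
qed

theorem lemma3p7:
  fixes n t s :: nat
  assumes "n \<ge> t + 1" and "t \<ge> 1" and "s \<ge> 2"
  shows "ideal_gen n (colon n (ideal_pow n (path_ideal n t (n - 1) :: 'k::field mpoly set) s)
              (path_mon t (n - t + 1)) \<union> {var (n - t)})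
       = ideal_gen n (ideal_pow n (path_ideal n t (n - t - 1)) s \<union> {var (n - t)})
     \<and> (n \<le> 2 * t \<longrightarrow> path_ideal n t (n - t - 1) = ({0} :: 'k mpoly set)
          \<and> ideal_gen n (colon n (ideal_pow n (path_ideal n t (n - 1) :: 'k mpoly set) s)
              (path_mon t (n - t + 1)) \<union> {var (n - t)}) = ideal_gen n {var (n - t)})"
proof -
  define x where "x = (var (n-t) :: 'k mpoly)"
  define u where "u = (path_mon t (n-t+1) :: 'k mpoly)"
  define I where "I = (path_ideal n t (n-1) :: 'k mpoly set)"
  define J where "J = (path_ideal n t (n-t-1) :: 'k mpoly set)"
  define C where "C = colon n (ideal_pow n I s) u"
  define V where "V = {n-t+1..<n+1}"
  have u_eq: "u = prod var V" unfolding u_def V_def path_mon_def using assms by (simp add: add.commute)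
  have Jsub: "J \<subseteq> I" unfolding J_def I_def path_ideal_def
    by (intro ideal_gen_mono subsetI gen_in) auto
  have Ipoly: "I \<subseteq> polyring n" unfolding I_def path_ideal_def
    by (intro ideal_gen_polyring) (auto intro: path_mon_polyring)
  have upoly: "u \<in> polyring n" unfolding u_def using assms by (intro path_mon_polyring) auto
  have xpoly: "x \<in> polyring n" unfolding x_def using assms by (intro polyring_var) auto
  have dkJ: "\<forall>j\<in>V. dk_closed j (ideal_pow n J s)"
  proof
    fix j assume j: "j \<in> V"
    have "dk_closed j J" unfolding J_def path_ideal_def
    proof (rule dk_gen, intro ballI)
      fix g assume "g \<in> {path_mon t i |i. 1 \<le> i \<and> i + t \<le> n - t - 1 + 1}"
      then obtain i where g: "g = path_mon t i" "1 \<le> i" "i + t \<le> n - t - 1 + 1" by blast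
      have jn: "j \<notin> {i..<i+t}" using j g(3) assms unfolding V_def by auto
      have "dvv j g = 0" "killv j g = g" unfolding g(1) path_mon_def
        using jn by (simp_all add: dvv_prod_var_free killv_prod_var_free)
      then show "dvv j g \<in> ideal_gen n {path_mon t i |i. 1 \<le> i \<and> i + t \<le> n - t - 1 + 1} \<and>
             killv j g \<in> ideal_gen n {path_mon t i |i. 1 \<le> i \<and> i + t \<le> n - t - 1 + 1}"
      proof -
        have "g \<in> ideal_gen n {path_mon t i |i. 1 \<le> i \<and> i + t \<le> n - t - 1 + 1}"
          using g by (intro gen_in) blast
        then show ?thesis using \<open>dvv j g = 0\<close> \<open>killv j g = g\<close> isidealD(1)[OF ideal_gen_isideal] by simp
      qed
    qed
    then show "dk_closed j (ideal_pow n J s)" by (rule dk_pow)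
  qed
  have YJ: "isideal n J" unfolding J_def path_ideal_def by (rule ideal_gen_isideal)
  have Gk: "\<forall>g\<in>{(path_mon t i :: 'k mpoly) |i. 1 \<le> i \<and> i + t \<le> n - 1 + 1}. killv (n - t) g \<in> J"
      proof
        fix g assume "g \<in> {(path_mon t i :: 'k mpoly) |i. 1 \<le> i \<and> i + t \<le> n - 1 + 1}"
        then obtain i where g: "g = path_mon t i" "1 \<le> i" "i + t \<le> n - 1 + 1" by blast
        show "killv (n - t) g \<in> J"
        proof (cases "i + t \<le> n - t")
          case True
          then have "killv (n-t) g = g" unfolding g(1) path_mon_def
            by (simp add: killv_prod_var_free)
          moreover have "g \<in> J" unfolding J_def path_ideal_def using g True assms
            by (intro gen_in) auto
          ultimately show ?thesis by simp
        next
          case False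
          then have "n - t \<in> {i..<i+t}" using g assms by auto
          then have "killv (n-t) g = 0" unfolding g(1) path_mon_def
            by (auto simp: killv_prod killv_var intro!: prod_zero)
          then show ?thesis unfolding J_def path_ideal_def using isidealD(1)[OF ideal_gen_isideal] by simp
        qed
      qed
  have killI: "\<forall>p\<in>I. killv (n-t) p \<in> J"
    unfolding I_def path_ideal_def using kill_gen[OF YJ Gk] by blast
  define R where "R = ideal_gen n (ideal_pow n J s \<union> {x})"
  define L where "L = ideal_gen n (C \<union> {x})"
  have RI: "isideal n R" unfolding R_def by (rule ideal_gen_isideal)
  have part1: "L = R"
  proof
    show "L \<subseteq> R" unfolding L_def R_def
    proof (intro ideal_gen_mono subsetI)
      fix f assume "f \<in> C \<union> {x}"
      then consider "f = x" | "f \<in> C" by blast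
      then show "f \<in> ideal_gen n (ideal_pow n J s \<union> {x})"
      proof cases
        case 1 then show ?thesis by (auto intro: gen_in)
      next
        case 2
        then have fp: "f \<in> polyring n" and fu: "f * u \<in> ideal_pow n I s" unfolding C_def colon_def by auto
        have "killv (n-t) (f * u) \<in> ideal_pow n J s" using kill_pow[OF killI fu] .
        moreover have "killv (n-t) (f * u) = killv (n-t) f * prod var V"
          unfolding killv_mult u_eq V_def by (subst killv_prod_var_free) auto
        ultimately have "killv (n-t) f * prod var V \<in> ideal_pow n J s" by simp
        then have k: "killv (n-t) f \<in> ideal_pow n J s"
          by (rule cancel_prod[OF _ dkJ, rotated]) (simp add: V_def)
        have "f = killv (n-t) f + dvv (n-t) f * x" using decomp[of "n-t" f] unfolding x_def
          by (simp add: mult.commute)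
        moreover have "killv (n-t) f \<in> R" using k unfolding R_def by (auto intro: gen_in)
        moreover have "dvv (n-t) f * x \<in> R" using RI fp unfolding R_def
          by (intro isidealD(3)[OF RI[unfolded R_def]] polyring_dvv gen_in) auto
        ultimately show ?thesis using isidealD(2)[OF RI, of "killv (n-t) f" "dvv (n-t) f * x"] unfolding R_def by simp
      qed
    qed
  next
    show "R \<subseteq> L" unfolding L_def R_def
    proof (intro ideal_gen_mono subsetI)
      fix g assume "g \<in> ideal_pow n J s \<union> {x}"
      then consider "g = x" | "g \<in> ideal_pow n J s" by blast
      then show "g \<in> ideal_gen n (C \<union> {x})"
      proof cases
        case 1 then show ?thesis by (auto intro: gen_in)
      next
        case 2
        have "g \<in> ideal_pow n I s" using 2 ideal_pow_mono[OF Jsub] by blast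
        then have "g * u \<in> ideal_pow n I s" using upoly by (intro isidealD(4)[OF ideal_pow_isideal])
        moreover have "g \<in> polyring n" using 2 ideal_pow_polyring[OF Ipoly] ideal_pow_mono[OF Jsub] by blast
        ultimately have "g \<in> C" unfolding C_def colon_def by simp
        then show ?thesis by (auto intro: gen_in)
      qed
    qed
  qed
  have part2: "J = {0} \<and> L = ideal_gen n {x}" if le: "n \<le> 2 * t"
  proof
    have e0: "{path_mon t i |i. 1 \<le> i \<and> i + t \<le> n - t - 1 + 1} = ({} :: 'k mpoly set)"
      using le assms by auto
    show J0: "J = {0}" unfolding J_def path_ideal_def e0 by (rule ideal_gen_empty)
    obtain s' where s': "s = Suc s'" using assms by (cases s) auto
    have "ideal_pow n J s = {0}" unfolding J0 s' by (rule ideal_pow_zero)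
    then have "L = ideal_gen n ({0} \<union> {x})" using part1 unfolding R_def by simp
    also have "\<dots> = ideal_gen n {x}"
    proof
      show "ideal_gen n ({0} \<union> {x}) \<subseteq> ideal_gen n {x}"
        using isidealD(1)[OF ideal_gen_isideal, of n "{x}"] by (intro ideal_gen_mono) (auto intro: gen_in)
      show "ideal_gen n {x} \<subseteq> ideal_gen n ({0} \<union> {x})"
        by (intro ideal_gen_mono) (auto intro: gen_in)
    qed
    finally show "L = ideal_gen n {x}" .
  qed
  show ?thesis using part1 part2 unfolding L_def R_def C_def I_def J_def x_def u_def by blast
qed

end
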